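(* Let $L$ be a pentagonal linkage and $X_k=\{P\in\overline{M^C}(L): |A_3A_5|=k\}$ a slice. On the relative interior of $X_k$, parameterize the slice by $x_2$ and denote by a prime the derivative $d/dx_2$. Then $$(-x_1)'=\frac{S_{125}}{S_{123}}\cdot\frac{S_{235}}{S_{135}},\qquad (-x_3)'=\frac{S_{234}}{S_{135}}\cdot\frac{S_{125}}{S_{123}},\qquad (x_5)'=\frac{S_{145}}{S_{135}}.$$
   Context: A pentagonal linkage $L$ is given by side lengths $a_1,\dots,a_5>0$; $M(L)$ is the set of planar 5-gons $(A_1,\dots,A_5)$ with $|A_iA_{i+1}|=a_i$ (indices mod 5) modulo all isometries of $\mathbb{R}^2$; $M^C(L)$ is the set of strictly convex configurations (convex pentagon $A_1\dots A_5$ in this cyclic order, no angle equal to $\pi$) and $\overline{M^C}(L)$ its closure. $b_i=|A_{i-1}A_{i+1}|$, $x_i=b_i^2$ (indices mod 5); on a slice $x_4=k^2$ is fixed and $x_1,x_3,x_5$ are functions of $x_2$. $S_{ijk}$ is the oriented area of triangle $A_iA_jA_k$ with respect to a fixed orientation of the plane. *)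

theory Defs
  imports "HOL-Analysis.Analysis"
begin

type_synonym pt = "real \<times> real"

text \<open>A planar pentagon is given by its vertices A 1, ..., A 5; indices are read mod 5
  (vtx A 0 = A 5, vtx A 6 = A 1, ...).\<close>
definition vtx :: "(nat \<Rightarrow> pt) \<Rightarrow> nat \<Rightarrow> pt" where
  "vtx A i = A ((i + 4) mod 5 + 1)"

definition sqd :: "pt \<Rightarrow> pt \<Rightarrow> real" where
  "sqd p q = (fst p - fst q)\<^sup>2 + (snd p - snd q)\<^sup>2"

definition oarea :: "(nat \<Rightarrow> pt) \<Rightarrow> nat \<Rightarrow> nat \<Rightarrow> nat \<Rightarrow> real" where
  "oarea A i j k = (let P = vtx A i; Q = vtx A j; R = vtx A k in
     ((fst Q - fst P) * (snd R - snd P) - (snd Q - snd P) * (fst R - fst P)) / 2)"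

text \<open>x_i = b_i^2 = |A_{i-1} A_{i+1}|^2.\<close>
definition xsq :: "(nat \<Rightarrow> pt) \<Rightarrow> nat \<Rightarrow> real" where
  "xsq A i = sqd (vtx A (i + 4)) (vtx A (i + 1))"

definition realizes :: "(nat \<Rightarrow> real) \<Rightarrow> (nat \<Rightarrow> pt) \<Rightarrow> bool" where
  "realizes a A \<longleftrightarrow> (\<forall>i\<in>{1..5}. sqrt (sqd (vtx A i) (vtx A (i + 1))) = a i)"

definition strictly_convex :: "(nat \<Rightarrow> pt) \<Rightarrow> bool" where
  "strictly_convex A \<longleftrightarrow>
     (\<forall>i\<in>{1..5}. \<forall>j\<in>{1..5}. j \<noteq> i \<and> j \<noteq> (i mod 5) + 1 \<longrightarrow> oarea A i (i + 1) j > 0) \<or>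
     (\<forall>i\<in>{1..5}. \<forall>j\<in>{1..5}. j \<noteq> i \<and> j \<noteq> (i mod 5) + 1 \<longrightarrow> oarea A i (i + 1) j < 0)"

text \<open>Strictly convex configurations of the slice |A_3 A_5| = k (the relative interior of X_k).\<close>
definition in_slice :: "(nat \<Rightarrow> real) \<Rightarrow> real \<Rightarrow> (nat \<Rightarrow> pt) \<Rightarrow> bool" where
  "in_slice a k A \<longleftrightarrow> realizes a A \<and> strictly_convex A \<and> sqrt (sqd (vtx A 3) (vtx A 5)) = k"

definition slice_fun :: "(nat \<Rightarrow> real) \<Rightarrow> real \<Rightarrow> nat \<Rightarrow> real \<Rightarrow> real" where
  "slice_fun a k i s = (THE y. \<exists>A. in_slice a k A \<and> xsq A 2 = s \<and> xsq A i = y)"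

end

theory Submission
  imports Defs
begin



definition QA :: "real \<Rightarrow> real \<Rightarrow> real \<Rightarrow> real" where "QA u1 u2 s = 4*u2* s - (u2+s-u1)^2"
definition QB :: "real \<Rightarrow> real \<Rightarrow> real \<Rightarrow> real" where "QB u5 K s = 4* s*K - (s+K-u5)^2"
definition QC :: "real \<Rightarrow> real \<Rightarrow> real \<Rightarrow> real" where "QC u3 u4 K = 4*u3*K - (u3+K-u4)^2"

definition F5 :: "real \<Rightarrow> real \<Rightarrow> real \<Rightarrow> real \<Rightarrow> real \<Rightarrow> real" where
 "F5 u3 u4 u5 K s = s + u3 - 2*((s+K-u5)/2*((u3+K-u4)/2) - sqrt (QB u5 K s)/2 * (sqrt (QC u3 u4 K)/2))/K"
definition F1 :: "real \<Rightarrow> real \<Rightarrow> real \<Rightarrow> real \<Rightarrow> real \<Rightarrow> real" where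
 "F1 u1 u2 u5 K s = u2 + K - 2*((u2+s-u1)/2*((s+K-u5)/2) - sqrt (QA u1 u2 s)/2 * (sqrt (QB u5 K s)/2))/s"
definition F3 :: "real \<Rightarrow> real \<Rightarrow> real \<Rightarrow> real \<Rightarrow> real \<Rightarrow> real \<Rightarrow> real \<Rightarrow> real" where
 "F3 u1 u2 u3 u4 u5 K s = u2 + u3 - 2*(((u2+s-u1)/2*((s+K-u5)/2) - sqrt (QA u1 u2 s)/2 * (sqrt (QB u5 K s)/2))*((u3+K-u4)/2)
     - ((s+K-u5)/2*(sqrt (QA u1 u2 s)/2) + sqrt (QB u5 K s)/2*((u2+s-u1)/2))*(sqrt (QC u3 u4 K)/2))/(s*K)"

lemma sqrt4sq: "sqrt (4*t^2) = 2*\<bar>t\<bar>"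
  by (simp add: real_sqrt_mult)

lemma absprod_pos: "(x::real)*y > 0 \<Longrightarrow> \<bar>x\<bar>*\<bar>y\<bar> = x*y"
  by (metis abs_mult abs_of_pos)
lemma absprod_neg: "(x::real)*y < 0 \<Longrightarrow> \<bar>x\<bar>*\<bar>y\<bar> = -(x*y)"
  by (metis abs_mult abs_of_neg)

lemma F5_coord:
  fixes x1 y1 x3 y3 x4 y4 x5 y5 :: real
  defines "s \<equiv> (x1-x3)^2+(y1-y3)^2" and "K \<equiv> (x5-x3)^2+(y5-y3)^2"
    and "u3 \<equiv> (x4-x3)^2+(y4-y3)^2" and "u4 \<equiv> (x5-x4)^2+(y5-y4)^2" and "u5 \<equiv> (x5-x1)^2+(y5-y1)^2"
  assumes K0: "K \<noteq> 0"
    and sg: "((x5-x3)*(y1-y3)-(y5-y3)*(x1-x3))*((x5-x3)*(y4-y3)-(y5-y3)*(x4-x3)) < 0"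
  shows "(x4-x1)^2+(y4-y1)^2 = F5 u3 u4 u5 K s"
proof -
  have a: "sqrt (QB u5 K s) = 2*\<bar>(x5-x3)*(y1-y3)-(y5-y3)*(x1-x3)\<bar>"
    unfolding QB_def s_def K_def u5_def by (subst sqrt4sq[symmetric]) (rule arg_cong[where f=sqrt], algebra)
  have b: "sqrt (QC u3 u4 K) = 2*\<bar>(x5-x3)*(y4-y3)-(y5-y3)*(x4-x3)\<bar>"
    unfolding QC_def u3_def u4_def K_def by (subst sqrt4sq[symmetric]) (rule arg_cong[where f=sqrt], algebra)
  have c: "sqrt (QB u5 K s)/2 * (sqrt (QC u3 u4 K)/2) = -(((x5-x3)*(y1-y3)-(y5-y3)*(x1-x3))*((x5-x3)*(y4-y3)-(y5-y3)*(x4-x3)))"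
    using absprod_neg[OF sg] unfolding a b by simp
  have d: "((x4-x1)^2+(y4-y1)^2) * K = (s + u3)*K - 2*((s+K-u5)/2*((u3+K-u4)/2) + (((x5-x3)*(y1-y3)-(y5-y3)*(x1-x3))*((x5-x3)*(y4-y3)-(y5-y3)*(x4-x3))))"
    unfolding s_def K_def u3_def u4_def u5_def by algebra
  show ?thesis unfolding F5_def c using K0 d by (simp add: field_simps)
qed

lemma sigma_ex:
  fixes a b c :: real
  assumes "a*b > 0" "b*c < 0"
  obtains \<sigma> where "\<sigma> = 1 \<or> \<sigma> = -1" "\<bar>a\<bar> = \<sigma>*a" "\<bar>b\<bar> = \<sigma>*b" "\<bar>c\<bar> = -\<sigma>*c"
proof (cases "b > 0")
  case True
  then have "a > 0" "c < 0" using assms by (auto simp: zero_less_mult_iff mult_less_0_iff)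
  then show ?thesis using that[of 1] True by auto
next
  case False
  then have "b < 0" using assms by (cases "b = 0") auto
  then have "a < 0" "c > 0" using assms by (auto simp: zero_less_mult_iff mult_less_0_iff)
  then show ?thesis using that[of "-1"] \<open>b < 0\<close> by auto
qed

lemma F13_coord:
  fixes x1 y1 x2 y2 x3 y3 x4 y4 x5 y5 :: real
  defines "s \<equiv> (x1-x3)^2+(y1-y3)^2" and "K \<equiv> (x5-x3)^2+(y5-y3)^2"
    and "u1 \<equiv> (x2-x1)^2+(y2-y1)^2" and "u2 \<equiv> (x3-x2)^2+(y3-y2)^2"
    and "u3 \<equiv> (x4-x3)^2+(y4-y3)^2" and "u4 \<equiv> (x5-x4)^2+(y5-y4)^2" and "u5 \<equiv> (x5-x1)^2+(y5-y1)^2"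
  defines "crp \<equiv> (x1-x3)*(y2-y3)-(y1-y3)*(x2-x3)"
    and "cer \<equiv> (x5-x3)*(y1-y3)-(y5-y3)*(x1-x3)"
    and "ceq \<equiv> (x5-x3)*(y4-y3)-(y5-y3)*(x4-x3)"
  assumes K0: "K \<noteq> 0" and s0: "s \<noteq> 0"
    and sg1: "crp*cer > 0" and sg2: "cer*ceq < 0"
  shows "(x5-x2)^2+(y5-y2)^2 = F1 u1 u2 u5 K s"
    and "(x4-x2)^2+(y4-y2)^2 = F3 u1 u2 u3 u4 u5 K s"
proof -
  obtain \<sigma> where sg: "\<sigma> = 1 \<or> \<sigma> = -1" "\<bar>crp\<bar> = \<sigma>*crp" "\<bar>cer\<bar> = \<sigma>*cer" "\<bar>ceq\<bar> = -\<sigma>*ceq"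
    using sigma_ex[OF sg1 sg2] by blast
  have a: "sqrt (QA u1 u2 s) = 2*\<bar>crp\<bar>"
    unfolding QA_def s_def u1_def u2_def crp_def by (subst sqrt4sq[symmetric]) (rule arg_cong[where f=sqrt], algebra)
  have b: "sqrt (QB u5 K s) = 2*\<bar>cer\<bar>"
    unfolding QB_def s_def K_def u5_def cer_def by (subst sqrt4sq[symmetric]) (rule arg_cong[where f=sqrt], algebra)
  have c: "sqrt (QC u3 u4 K) = 2*\<bar>ceq\<bar>"
    unfolding QC_def u3_def u4_def K_def ceq_def by (subst sqrt4sq[symmetric]) (rule arg_cong[where f=sqrt], algebra)
  have d1: "((x5-x2)^2+(y5-y2)^2) * s = (u2 + K)* s - 2*((u2+s-u1)/2*((s+K-u5)/2) - crp*cer)"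
    unfolding s_def K_def u1_def u2_def u5_def crp_def cer_def by algebra
  have e1: "sqrt (QA u1 u2 s)/2 * (sqrt (QB u5 K s)/2) = crp*cer"
    unfolding a b using sg(1) sg(2,3) by auto
  show "(x5-x2)^2+(y5-y2)^2 = F1 u1 u2 u5 K s" unfolding F1_def e1 using s0 d1 by (simp add: field_simps)
  have d3: "((x4-x2)^2+(y4-y2)^2) * (s*K) = (u2 + u3)*(s*K) - 2*(((u2+s-u1)/2*((s+K-u5)/2) - crp*cer)*((u3+K-u4)/2)
      + ((s+K-u5)/2*crp + cer*((u2+s-u1)/2))*ceq)"
    unfolding s_def K_def u1_def u2_def u3_def u4_def u5_def crp_def cer_def ceq_def by algebra
  have e3: "((s+K-u5)/2*(sqrt (QA u1 u2 s)/2) + sqrt (QB u5 K s)/2*((u2+s-u1)/2))*(sqrt (QC u3 u4 K)/2)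
     = -(((s+K-u5)/2*crp + cer*((u2+s-u1)/2))*ceq)"
    unfolding a b c using sg by (auto simp: field_simps)
  show "(x4-x2)^2+(y4-y2)^2 = F3 u1 u2 u3 u4 u5 K s" unfolding F3_def e1 e3 using s0 K0 d3 by (simp add: field_simps)
qed

lemma gen5_deriv:
  assumes g: "(g has_real_derivative G) (at x)" and K: "K \<noteq> 0"
  shows "((\<lambda>s. s + u3 - 2*((s+K-u5)/2*E - g s/2 * c)/K) has_real_derivative
     1 - 2*(E/2 - G/2 * c)/K) (at x)"
  using g K by (auto intro!: derivative_eq_intros simp: field_simps)

lemma gen1_deriv:
  assumes g1: "(g1 has_real_derivative G1) (at x)" and g2: "(g2 has_real_derivative G2) (at x)"
    and x: "x \<noteq> 0"
  shows "((\<lambda>s. u2 + K - 2*((u2+s-u1)/2*((s+K-u5)/2) - g1 s/2 * (g2 s/2))/s) has_real_derivative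
     -2*((((x+K-u5)/2 + (u2+x-u1)/2)/2 - (G1 * g2 x + g1 x * G2)/4) * x - ((u2+x-u1)/2*((x+K-u5)/2) - g1 x/2 * (g2 x/2)))/x^2) (at x)"
  using g1 g2 x by (auto intro!: derivative_eq_intros simp: field_simps power2_eq_square)

lemma QA_deriv: "((\<lambda>s. QA u1 u2 s) has_real_derivative (4*u2 - 2*(u2+s-u1))) (at s)"
  unfolding QA_def by (auto intro!: derivative_eq_intros)
lemma QB_deriv: "((\<lambda>s. QB u5 K s) has_real_derivative (4*K - 2*(s+K-u5))) (at s)"
  unfolding QB_def by (auto intro!: derivative_eq_intros)
lemma sqrtQA_deriv: assumes "QA u1 u2 s > 0" shows 
   "((\<lambda>s. sqrt (QA u1 u2 s)) has_real_derivative (4*u2 - 2*(u2+s-u1))/(2 * sqrt (QA u1 u2 s))) (at s)"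
  using DERIV_chain2[OF DERIV_real_sqrt[OF assms] QA_deriv] by (simp add: field_simps)
lemma sqrtQB_deriv: assumes "QB u5 K s > 0" shows 
   "((\<lambda>s. sqrt (QB u5 K s)) has_real_derivative (4*K - 2*(s+K-u5))/(2 * sqrt (QB u5 K s))) (at s)"
  using DERIV_chain2[OF DERIV_real_sqrt[OF assms] QB_deriv] by (simp add: field_simps)

lemma gen3_deriv:
  assumes g1: "(g1 has_real_derivative G1) (at x)" and g2: "(g2 has_real_derivative G2) (at x)"
    and x: "x \<noteq> 0" and K: "K \<noteq> 0"
  shows "((\<lambda>s. u2 + u3 - 2*(((u2+s-u1)/2*((s+K-u5)/2) - g1 s/2 * (g2 s/2))*E
     - ((s+K-u5)/2*(g1 s/2) + g2 s/2*((u2+s-u1)/2))*c)/(s*K)) has_real_derivative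
     -2*(((((x+K-u5)/2 + (u2+x-u1)/2)/2 - (G1 * g2 x + g1 x * G2)/4) * E
          - (g1 x + (x+K-u5) * G1 + G2 * (u2+x-u1) + g2 x)/4 * c) * x
        - (((u2+x-u1)/2*((x+K-u5)/2) - g1 x/2 * (g2 x/2))*E
     - ((x+K-u5)/2*(g1 x/2) + g2 x/2*((u2+x-u1)/2))*c))/(x^2*K)) (at x)"
  using g1 g2 x K by (auto intro!: derivative_eq_intros simp: field_simps power2_eq_square)

lemma D_vals:
  fixes x1 y1 x2 y2 x3 y3 x4 y4 x5 y5 :: real
  defines "s \<equiv> (x1-x3)^2+(y1-y3)^2" and "K \<equiv> (x5-x3)^2+(y5-y3)^2"
    and "u1 \<equiv> (x2-x1)^2+(y2-y1)^2" and "u2 \<equiv> (x3-x2)^2+(y3-y2)^2"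
    and "u3 \<equiv> (x4-x3)^2+(y4-y3)^2" and "u4 \<equiv> (x5-x4)^2+(y5-y4)^2" and "u5 \<equiv> (x5-x1)^2+(y5-y1)^2"
  defines "crp \<equiv> (x1-x3)*(y2-y3)-(y1-y3)*(x2-x3)"
    and "cer \<equiv> (x5-x3)*(y1-y3)-(y5-y3)*(x1-x3)"
    and "ceq \<equiv> (x5-x3)*(y4-y3)-(y5-y3)*(x4-x3)"
  defines "ar \<equiv> \<lambda>xi yi xj yj xk yk. ((xj-xi)*(yk-yi)-(yj-yi)*(xk-xi))/(2::real)"
  assumes K0: "K \<noteq> 0" and s0: "s \<noteq> 0"
    and sg1: "crp*cer > 0" and sg2: "cer*ceq < 0"
  shows "1 - 2*((u3+K-u4)/2/2 - ((4*K - 2*(s+K-u5))/(2 * sqrt (QB u5 K s)))/2 * (sqrt (QC u3 u4 K)/2))/K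
     = ar x1 y1 x4 y4 x5 y5 / ar x1 y1 x3 y3 x5 y5"
proof -
  obtain \<sigma> where sg: "\<sigma> = 1 \<or> \<sigma> = -1" "\<bar>crp\<bar> = \<sigma>*crp" "\<bar>cer\<bar> = \<sigma>*cer" "\<bar>ceq\<bar> = -\<sigma>*ceq"
    using sigma_ex[OF sg1 sg2] by blast
  have b0: "sqrt (QB u5 K s) = 2*\<bar>cer\<bar>"
    unfolding QB_def s_def K_def u5_def cer_def by (subst sqrt4sq[symmetric]) (rule arg_cong[where f=sqrt], algebra)
  have c0: "sqrt (QC u3 u4 K) = 2*\<bar>ceq\<bar>"
    unfolding QC_def u3_def u4_def K_def ceq_def by (subst sqrt4sq[symmetric]) (rule arg_cong[where f=sqrt], algebra)
  have b: "sqrt (QB u5 K s) = 2*\<sigma>*cer" using b0 sg(3) by simp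
  have c: "sqrt (QC u3 u4 K) = -2*\<sigma>*ceq" using c0 sg(4) by simp
  have cer0: "cer \<noteq> 0" using sg1 by auto
  have ar135: "ar x1 y1 x3 y3 x5 y5 = cer/2" unfolding ar_def cer_def by algebra
  define a145 where "a145 = (x4-x1)*(y5-y1)-(y4-y1)*(x5-x1)"
  have ar145: "ar x1 y1 x4 y4 x5 y5 = a145/2" unfolding ar_def a145_def by simp
  have key: "(2*K*cer - (u3+K-u4)*cer - (2*K - (s+K-u5))*ceq) = 2 * a145 * K"
    unfolding s_def K_def u3_def u4_def u5_def cer_def ceq_def a145_def by algebra
  show ?thesis unfolding b c ar135 ar145 using sg(1) cer0 K0 key
    apply (elim disjE) 
    apply (simp_all add: field_simps)
    apply algebra+
    done
qed


lemma K1: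
  fixes r1 r2 p1 p2 e1 e2 :: real
  assumes "s = r1*r1+r2*r2" and "u2 = p1*p1+p2*p2" and "K = e1*e1+e2*e2" and "P = r1*p1+r2*p2"
    and "D = r1*e1+r2*e2" and "crp = r1*p2-r2*p1" and "cer = e1*r2-e2*r1"
    and "a125 = (p1-r1)*(e2-r2)-(p2-r2)*(e1-r1)" and "a235 = (-p1)*(e2-p2)-(-p2)*(e1-p1)"
  shows "((D+P)*crp*cer - (u2-P)*cer^2 - (K-D)*crp^2) * s - 2*(P*D - crp*cer)*crp*cer = a125*a235 * s^2"
  unfolding assms by algebra

lemma K3:
  fixes r1 r2 p1 p2 e1 e2 q1 q2 :: real
  assumes "s = r1*r1+r2*r2" and "u2 = p1*p1+p2*p2" and "K = e1*e1+e2*e2" and "P = r1*p1+r2*p2"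
    and "D = r1*e1+r2*e2" and "crp = r1*p2-r2*p1" and "cer = e1*r2-e2*r1" and "ceq = e1*q2-e2*q1"
    and "E = e1*q1+e2*q2"
    and "a125 = (p1-r1)*(e2-r2)-(p2-r2)*(e1-r1)" and "a234 = (-p1)*(q2-p2)-(-p2)*(q1-p1)"
  shows "((((D+P)*crp*cer-((u2-P)*cer^2+(K-D)*crp^2))*E
      + (crp^2*cer+cer^2*crp+D*(u2-P)*cer+P*(K-D)*crp)*ceq) * s
      - 2*((P*D-crp*cer)*E+(D*crp+cer*P)*ceq)*crp*cer) = a234*a125 * s^2*K"
  unfolding assms by algebra

lemma D1_val:
  fixes x1 y1 x2 y2 x3 y3 x4 y4 x5 y5 :: real
  defines "s \<equiv> (x1-x3)^2+(y1-y3)^2" and "K \<equiv> (x5-x3)^2+(y5-y3)^2"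
    and "u1 \<equiv> (x2-x1)^2+(y2-y1)^2" and "u2 \<equiv> (x3-x2)^2+(y3-y2)^2"
    and "u3 \<equiv> (x4-x3)^2+(y4-y3)^2" and "u4 \<equiv> (x5-x4)^2+(y5-y4)^2" and "u5 \<equiv> (x5-x1)^2+(y5-y1)^2"
  defines "crp \<equiv> (x1-x3)*(y2-y3)-(y1-y3)*(x2-x3)"
    and "cer \<equiv> (x5-x3)*(y1-y3)-(y5-y3)*(x1-x3)"
    and "ceq \<equiv> (x5-x3)*(y4-y3)-(y5-y3)*(x4-x3)"
  defines "ar \<equiv> \<lambda>xi yi xj yj xk yk. ((xj-xi)*(yk-yi)-(yj-yi)*(xk-xi))/(2::real)"
  assumes K0: "K \<noteq> 0" and s0: "s \<noteq> 0"
    and sg1: "crp*cer > 0" and sg2: "cer*ceq < 0"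
  shows "-2*((((s+K-u5)/2 + (u2+s-u1)/2)/2 - ((4*u2 - 2*(u2+s-u1))/(2 * sqrt (QA u1 u2 s)) * sqrt (QB u5 K s)
        + sqrt (QA u1 u2 s) * ((4*K - 2*(s+K-u5))/(2 * sqrt (QB u5 K s))))/4) * s
      - ((u2+s-u1)/2*((s+K-u5)/2) - sqrt (QA u1 u2 s)/2 * (sqrt (QB u5 K s)/2)))/s^2
     = -(ar x1 y1 x2 y2 x5 y5 / ar x1 y1 x2 y2 x3 y3) * (ar x2 y2 x3 y3 x5 y5 / ar x1 y1 x3 y3 x5 y5)"
proof -
  obtain \<sigma> where sg: "\<sigma> = 1 \<or> \<sigma> = -1" "\<bar>crp\<bar> = \<sigma>*crp" "\<bar>cer\<bar> = \<sigma>*cer" "\<bar>ceq\<bar> = -\<sigma>*ceq"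
    using sigma_ex[OF sg1 sg2] by blast
  have a0: "sqrt (QA u1 u2 s) = 2*\<bar>crp\<bar>"
    unfolding QA_def s_def u1_def u2_def crp_def by (subst sqrt4sq[symmetric]) (rule arg_cong[where f=sqrt], algebra)
  have b0: "sqrt (QB u5 K s) = 2*\<bar>cer\<bar>"
    unfolding QB_def s_def K_def u5_def cer_def by (subst sqrt4sq[symmetric]) (rule arg_cong[where f=sqrt], algebra)
  have c0: "sqrt (QC u3 u4 K) = 2*\<bar>ceq\<bar>"
    unfolding QC_def u3_def u4_def K_def ceq_def by (subst sqrt4sq[symmetric]) (rule arg_cong[where f=sqrt], algebra)
  have a: "sqrt (QA u1 u2 s) = 2*\<sigma>*crp" using a0 sg(2) by simp
  have b: "sqrt (QB u5 K s) = 2*\<sigma>*cer" using b0 sg(3) by simp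
  have c: "sqrt (QC u3 u4 K) = -2*\<sigma>*ceq" using c0 sg(4) by simp
  have cer0: "cer \<noteq> 0" using sg1 by auto
  have crp0: "crp \<noteq> 0" using sg1 by auto
  define a125 where "a125 = (x2-x1)*(y5-y1)-(y2-y1)*(x5-x1)"
  define a235 where "a235 = (x3-x2)*(y5-y2)-(y3-y2)*(x5-x2)"
  define a234 where "a234 = (x3-x2)*(y4-y2)-(y3-y2)*(x4-x2)"
  have ar125: "ar x1 y1 x2 y2 x5 y5 = a125/2" unfolding ar_def a125_def by simp
  have ar235: "ar x2 y2 x3 y3 x5 y5 = a235/2" unfolding ar_def a235_def by simp
  have ar234: "ar x2 y2 x3 y3 x4 y4 = a234/2" unfolding ar_def a234_def by simp
  have ar123: "ar x1 y1 x2 y2 x3 y3 = crp/2" unfolding ar_def crp_def by algebra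
  have ar135: "ar x1 y1 x3 y3 x5 y5 = cer/2" unfolding ar_def cer_def by algebra
  have hs: "s = (x1-x3)*(x1-x3)+(y1-y3)*(y1-y3)" unfolding s_def by algebra
  have hu2: "u2 = (x2-x3)*(x2-x3)+(y2-y3)*(y2-y3)" unfolding u2_def by algebra
  have hK: "K = (x5-x3)*(x5-x3)+(y5-y3)*(y5-y3)" unfolding K_def by algebra
  have hP: "(u2+s-u1)/2 = (x1-x3)*(x2-x3)+(y1-y3)*(y2-y3)" unfolding u2_def s_def u1_def by (simp add: field_simps) algebra
  have hD: "(s+K-u5)/2 = (x1-x3)*(x5-x3)+(y1-y3)*(y5-y3)" unfolding K_def s_def u5_def by (simp add: field_simps) algebra
  have hE: "(u3+K-u4)/2 = (x5-x3)*(x4-x3)+(y5-y3)*(y4-y3)" unfolding K_def u3_def u4_def by (simp add: field_simps) algebra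
  have hcrp: "crp = (x1-x3)*(y2-y3)-(y1-y3)*(x2-x3)" unfolding crp_def ..
  have hcer: "cer = (x5-x3)*(y1-y3)-(y5-y3)*(x1-x3)" unfolding cer_def ..
  have hceq: "ceq = (x5-x3)*(y4-y3)-(y5-y3)*(x4-x3)" unfolding ceq_def ..
  have h125: "a125 = ((x2-x3)-(x1-x3))*((y5-y3)-(y1-y3))-((y2-y3)-(y1-y3))*((x5-x3)-(x1-x3))" unfolding a125_def by algebra
  have h235: "a235 = (-(x2-x3))*((y5-y3)-(y2-y3))-(-(y2-y3))*((x5-x3)-(x2-x3))" unfolding a235_def by algebra
  have h234: "a234 = (-(x2-x3))*((y4-y3)-(y2-y3))-(-(y2-y3))*((x4-x3)-(x2-x3))" unfolding a234_def by algebra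
  have key: "((((s+K-u5)/2)+((u2+s-u1)/2))*crp*cer - (u2-((u2+s-u1)/2))*cer^2 - (K-((s+K-u5)/2))*crp^2) * s
      - 2*(((u2+s-u1)/2)*((s+K-u5)/2) - crp*cer)*crp*cer = a125*a235 * s^2"
    by (rule K1[OF hs hu2 hK hP hD hcrp hcer h125 h235])
  show ?thesis unfolding a b ar135 ar125 ar235 ar123 using sg(1) cer0 crp0 s0 key
    apply (elim disjE) 
    apply (simp_all add: field_simps power2_eq_square)
    apply algebra+
    done
qed

lemma D3_val:
  fixes x1 y1 x2 y2 x3 y3 x4 y4 x5 y5 :: real
  defines "s \<equiv> (x1-x3)^2+(y1-y3)^2" and "K \<equiv> (x5-x3)^2+(y5-y3)^2"
    and "u1 \<equiv> (x2-x1)^2+(y2-y1)^2" and "u2 \<equiv> (x3-x2)^2+(y3-y2)^2"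
    and "u3 \<equiv> (x4-x3)^2+(y4-y3)^2" and "u4 \<equiv> (x5-x4)^2+(y5-y4)^2" and "u5 \<equiv> (x5-x1)^2+(y5-y1)^2"
  defines "crp \<equiv> (x1-x3)*(y2-y3)-(y1-y3)*(x2-x3)"
    and "cer \<equiv> (x5-x3)*(y1-y3)-(y5-y3)*(x1-x3)"
    and "ceq \<equiv> (x5-x3)*(y4-y3)-(y5-y3)*(x4-x3)"
  defines "ar \<equiv> \<lambda>xi yi xj yj xk yk. ((xj-xi)*(yk-yi)-(yj-yi)*(xk-xi))/(2::real)"
  assumes K0: "K \<noteq> 0" and s0: "s \<noteq> 0"
    and sg1: "crp*cer > 0" and sg2: "cer*ceq < 0"
  shows "-2*(((((s+K-u5)/2 + (u2+s-u1)/2)/2 - ((4*u2 - 2*(u2+s-u1))/(2 * sqrt (QA u1 u2 s)) * sqrt (QB u5 K s)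
        + sqrt (QA u1 u2 s) * ((4*K - 2*(s+K-u5))/(2 * sqrt (QB u5 K s))))/4) * ((u3+K-u4)/2)
          - (sqrt (QA u1 u2 s) + (s+K-u5) * ((4*u2 - 2*(u2+s-u1))/(2 * sqrt (QA u1 u2 s)))
             + ((4*K - 2*(s+K-u5))/(2 * sqrt (QB u5 K s))) * (u2+s-u1) + sqrt (QB u5 K s))/4 * (sqrt (QC u3 u4 K)/2)) * s
        - (((u2+s-u1)/2*((s+K-u5)/2) - sqrt (QA u1 u2 s)/2 * (sqrt (QB u5 K s)/2))*((u3+K-u4)/2)
     - ((s+K-u5)/2*(sqrt (QA u1 u2 s)/2) + sqrt (QB u5 K s)/2*((u2+s-u1)/2))*(sqrt (QC u3 u4 K)/2)))/(s^2*K)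
     = -(ar x2 y2 x3 y3 x4 y4 / ar x1 y1 x3 y3 x5 y5) * (ar x1 y1 x2 y2 x5 y5 / ar x1 y1 x2 y2 x3 y3)"
proof -
  obtain \<sigma> where sg: "\<sigma> = 1 \<or> \<sigma> = -1" "\<bar>crp\<bar> = \<sigma>*crp" "\<bar>cer\<bar> = \<sigma>*cer" "\<bar>ceq\<bar> = -\<sigma>*ceq"
    using sigma_ex[OF sg1 sg2] by blast
  have a0: "sqrt (QA u1 u2 s) = 2*\<bar>crp\<bar>"
    unfolding QA_def s_def u1_def u2_def crp_def by (subst sqrt4sq[symmetric]) (rule arg_cong[where f=sqrt], algebra)
  have b0: "sqrt (QB u5 K s) = 2*\<bar>cer\<bar>"
    unfolding QB_def s_def K_def u5_def cer_def by (subst sqrt4sq[symmetric]) (rule arg_cong[where f=sqrt], algebra)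
  have c0: "sqrt (QC u3 u4 K) = 2*\<bar>ceq\<bar>"
    unfolding QC_def u3_def u4_def K_def ceq_def by (subst sqrt4sq[symmetric]) (rule arg_cong[where f=sqrt], algebra)
  have a: "sqrt (QA u1 u2 s) = 2*\<sigma>*crp" using a0 sg(2) by simp
  have b: "sqrt (QB u5 K s) = 2*\<sigma>*cer" using b0 sg(3) by simp
  have c: "sqrt (QC u3 u4 K) = -2*\<sigma>*ceq" using c0 sg(4) by simp
  have cer0: "cer \<noteq> 0" using sg1 by auto
  have crp0: "crp \<noteq> 0" using sg1 by auto
  define a125 where "a125 = (x2-x1)*(y5-y1)-(y2-y1)*(x5-x1)"
  define a235 where "a235 = (x3-x2)*(y5-y2)-(y3-y2)*(x5-x2)"
  define a234 where "a234 = (x3-x2)*(y4-y2)-(y3-y2)*(x4-x2)"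
  have ar125: "ar x1 y1 x2 y2 x5 y5 = a125/2" unfolding ar_def a125_def by simp
  have ar235: "ar x2 y2 x3 y3 x5 y5 = a235/2" unfolding ar_def a235_def by simp
  have ar234: "ar x2 y2 x3 y3 x4 y4 = a234/2" unfolding ar_def a234_def by simp
  have ar123: "ar x1 y1 x2 y2 x3 y3 = crp/2" unfolding ar_def crp_def by algebra
  have ar135: "ar x1 y1 x3 y3 x5 y5 = cer/2" unfolding ar_def cer_def by algebra
  have hs: "s = (x1-x3)*(x1-x3)+(y1-y3)*(y1-y3)" unfolding s_def by algebra
  have hu2: "u2 = (x2-x3)*(x2-x3)+(y2-y3)*(y2-y3)" unfolding u2_def by algebra
  have hK: "K = (x5-x3)*(x5-x3)+(y5-y3)*(y5-y3)" unfolding K_def by algebra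
  have hP: "(u2+s-u1)/2 = (x1-x3)*(x2-x3)+(y1-y3)*(y2-y3)" unfolding u2_def s_def u1_def by (simp add: field_simps) algebra
  have hD: "(s+K-u5)/2 = (x1-x3)*(x5-x3)+(y1-y3)*(y5-y3)" unfolding K_def s_def u5_def by (simp add: field_simps) algebra
  have hE: "(u3+K-u4)/2 = (x5-x3)*(x4-x3)+(y5-y3)*(y4-y3)" unfolding K_def u3_def u4_def by (simp add: field_simps) algebra
  have hcrp: "crp = (x1-x3)*(y2-y3)-(y1-y3)*(x2-x3)" unfolding crp_def ..
  have hcer: "cer = (x5-x3)*(y1-y3)-(y5-y3)*(x1-x3)" unfolding cer_def ..
  have hceq: "ceq = (x5-x3)*(y4-y3)-(y5-y3)*(x4-x3)" unfolding ceq_def ..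
  have h125: "a125 = ((x2-x3)-(x1-x3))*((y5-y3)-(y1-y3))-((y2-y3)-(y1-y3))*((x5-x3)-(x1-x3))" unfolding a125_def by algebra
  have h235: "a235 = (-(x2-x3))*((y5-y3)-(y2-y3))-(-(y2-y3))*((x5-x3)-(x2-x3))" unfolding a235_def by algebra
  have h234: "a234 = (-(x2-x3))*((y4-y3)-(y2-y3))-(-(y2-y3))*((x4-x3)-(x2-x3))" unfolding a234_def by algebra
  have key: "((((((s+K-u5)/2)+((u2+s-u1)/2))*crp*cer-((u2-((u2+s-u1)/2))*cer^2+(K-((s+K-u5)/2))*crp^2))*((u3+K-u4)/2)
      + (crp^2*cer+cer^2*crp+((s+K-u5)/2)*(u2-((u2+s-u1)/2))*cer+((u2+s-u1)/2)*(K-((s+K-u5)/2))*crp)*ceq) * s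
      - 2*((((u2+s-u1)/2)*((s+K-u5)/2)-crp*cer)*((u3+K-u4)/2)+(((s+K-u5)/2)*crp+cer*((u2+s-u1)/2))*ceq)*crp*cer) = a234*a125 * s^2*K"
    by (rule K3[OF hs hu2 hK hP hD hcrp hcer hceq hE h125 h234])
  show ?thesis unfolding a b c ar135 ar125 ar234 ar123 using sg(1) cer0 crp0 s0 K0 key
    apply (elim disjE) 
    apply (simp_all add: field_simps power2_eq_square)
    apply algebra+
    done
qed



lemma vtx_n: "((n::nat)+4) mod 5 + 1 = m \<Longrightarrow> vtx C n = C m" unfolding vtx_def by simp
lemma vtx_simps[simp]: "vtx C 1 = C 1" "vtx C 2 = C 2" "vtx C 3 = C 3" "vtx C 4 = C 4" "vtx C 5 = C 5"
  "vtx C 6 = C 1" "vtx C 7 = C 2" "vtx C 9 = C 4"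
  by (rule vtx_n, simp)+

lemma sqrt_eq_sq: "sqrt x = a \<Longrightarrow> x \<ge> 0 \<Longrightarrow> x = a^2"
  by auto

lemma sqd_nonneg: "sqd p q \<ge> 0" unfolding sqd_def by simp

lemma slice_basic:
  assumes "in_slice a k C"
  shows "sqd (C 1) (C 2) = (a 1)^2" "sqd (C 2) (C 3) = (a 2)^2" "sqd (C 3) (C 4) = (a 3)^2"
    "sqd (C 4) (C 5) = (a 4)^2" "sqd (C 5) (C 1) = (a 5)^2" "sqd (C 3) (C 5) = k^2"
    "strictly_convex C"
proof -
  have r: "realizes a C" and c: "strictly_convex C" and kk: "sqrt (sqd (C 3) (C 5)) = k"
    using assms unfolding in_slice_def by auto
  have h: "\<And>i. i \<in> {1..5} \<Longrightarrow> sqd (vtx C i) (vtx C (i + 1)) = (a i)^2" 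
    using r sqrt_eq_sq sqd_nonneg unfolding realizes_def by blast
  have "sqd (vtx C 1) (vtx C (1+1)) = (a 1)^2" by (rule h) simp
  then show "sqd (C 1) (C 2) = (a 1)^2" by (simp only: one_add_one vtx_simps)
  have "sqd (vtx C 2) (vtx C (2+1)) = (a 2)^2" by (rule h) simp
  then show "sqd (C 2) (C 3) = (a 2)^2" by (simp only: vtx_simps numeral_plus_one semiring_norm)
  have "sqd (vtx C 3) (vtx C (3+1)) = (a 3)^2" by (rule h) simp
  then show "sqd (C 3) (C 4) = (a 3)^2" by (simp only: vtx_simps numeral_plus_one semiring_norm)
  have "sqd (vtx C 4) (vtx C (4+1)) = (a 4)^2" by (rule h) simp
  then show "sqd (C 4) (C 5) = (a 4)^2" by (simp only: vtx_simps numeral_plus_one semiring_norm)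
  have "sqd (vtx C 5) (vtx C (5+1)) = (a 5)^2" by (rule h) simp
  then show "sqd (C 5) (C 1) = (a 5)^2" by (simp only: vtx_simps numeral_plus_one semiring_norm)
  show "sqd (C 3) (C 5) = k^2" using kk by (auto intro!: sqrt_eq_sq sqd_nonneg)
  show "strictly_convex C" by (fact c)
qed
lemma conv_signs:
  assumes "strictly_convex C"
  shows "(oarea C 1 2 3 > 0 \<and> oarea C 5 6 3 > 0 \<and> oarea C 3 4 5 > 0) \<or>
         (oarea C 1 2 3 < 0 \<and> oarea C 5 6 3 < 0 \<and> oarea C 3 4 5 < 0)"
  using assms unfolding strictly_convex_def
proof (elim disjE)
  assume h: "\<forall>i\<in>{1..5}. \<forall>j\<in>{1..5}. j \<noteq> i \<and> j \<noteq> i mod 5 + 1 \<longrightarrow> 0 < oarea C i (i + 1) j"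
  have "0 < oarea C 1 (1+1) 3" by (rule h[rule_format]) simp_all
  moreover have "0 < oarea C 5 (5+1) 3" by (rule h[rule_format]) simp_all
  moreover have "0 < oarea C 3 (3+1) 5" by (rule h[rule_format]) simp_all
  ultimately show ?thesis by (simp only: one_add_one numeral_plus_one semiring_norm) simp
next
  assume h: "\<forall>i\<in>{1..5}. \<forall>j\<in>{1..5}. j \<noteq> i \<and> j \<noteq> i mod 5 + 1 \<longrightarrow> oarea C i (i + 1) j < 0"
  have "oarea C 1 (1+1) 3 < 0" by (rule h[rule_format]) simp_all
  moreover have "oarea C 5 (5+1) 3 < 0" by (rule h[rule_format]) simp_all
  moreover have "oarea C 3 (3+1) 5 < 0" by (rule h[rule_format]) simp_all
  ultimately show ?thesis by (simp only: one_add_one numeral_plus_one semiring_norm) simp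
qed

lemma coord_signs:
  assumes "strictly_convex C"
  defines "x1 \<equiv> fst (C 1)" and "y1 \<equiv> snd (C 1)" and "x2 \<equiv> fst (C 2)" and "y2 \<equiv> snd (C 2)"
    and "x3 \<equiv> fst (C 3)" and "y3 \<equiv> snd (C 3)" and "x4 \<equiv> fst (C 4)" and "y4 \<equiv> snd (C 4)"
    and "x5 \<equiv> fst (C 5)" and "y5 \<equiv> snd (C 5)"
  shows "((x1-x3)*(y2-y3)-(y1-y3)*(x2-x3)) * ((x5-x3)*(y1-y3)-(y5-y3)*(x1-x3)) > 0"
    and "((x5-x3)*(y1-y3)-(y5-y3)*(x1-x3)) * ((x5-x3)*(y4-y3)-(y5-y3)*(x4-x3)) < 0"
proof -
  have a: "oarea C 1 2 3 = ((x1-x3)*(y2-y3)-(y1-y3)*(x2-x3))/2"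
    unfolding oarea_def Let_def x1_def y1_def x2_def y2_def x3_def y3_def vtx_simps by algebra
  have b: "oarea C 5 6 3 = ((x5-x3)*(y1-y3)-(y5-y3)*(x1-x3))/2"
    unfolding oarea_def Let_def x1_def y1_def x5_def y5_def x3_def y3_def vtx_simps by algebra
  have c: "oarea C 3 4 5 = -((x5-x3)*(y4-y3)-(y5-y3)*(x4-x3))/2"
    unfolding oarea_def Let_def x4_def y4_def x5_def y5_def x3_def y3_def vtx_simps by algebra
  show "((x1-x3)*(y2-y3)-(y1-y3)*(x2-x3)) * ((x5-x3)*(y1-y3)-(y5-y3)*(x1-x3)) > 0"
    and "((x5-x3)*(y1-y3)-(y5-y3)*(x1-x3)) * ((x5-x3)*(y4-y3)-(y5-y3)*(x4-x3)) < 0"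
    using conv_signs[OF assms(1)] unfolding a b c
    by (auto simp: zero_less_mult_iff mult_less_0_iff)
qed


lemma nat_facts: "(1::nat)+4 = 5" "(1::nat)+1 = 2" "(2::nat)+4=6" "(2::nat)+1=3" "(3::nat)+4 = 7" "(3::nat)+1=4"
   "(5::nat)+4=9" "(5::nat)+1=6" by simp_all

lemma sumsq0: "(a::real)^2 + b^2 = 0 \<Longrightarrow> a = 0 \<and> b = 0"
  by (metis add_nonneg_eq_0_iff zero_le_power2 power_eq_0_iff zero_neq_numeral)

lemma slice_F:
  assumes "in_slice a k C"
  shows "xsq C 1 = F1 ((a 1)^2) ((a 2)^2) ((a 5)^2) (k^2) (xsq C 2)"
    and "xsq C 3 = F3 ((a 1)^2) ((a 2)^2) ((a 3)^2) ((a 4)^2) ((a 5)^2) (k^2) (xsq C 2)"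
    and "xsq C 5 = F5 ((a 3)^2) ((a 4)^2) ((a 5)^2) (k^2) (xsq C 2)"
proof -
  note b = slice_basic[OF assms]
  define x1 where "x1 = fst (C 1)" define y1 where "y1 = snd (C 1)"
  define x2 where "x2 = fst (C 2)" define y2 where "y2 = snd (C 2)"
  define x3 where "x3 = fst (C 3)" define y3 where "y3 = snd (C 3)"
  define x4 where "x4 = fst (C 4)" define y4 where "y4 = snd (C 4)"
  define x5 where "x5 = fst (C 5)" define y5 where "y5 = snd (C 5)"
  note defs = x1_def y1_def x2_def y2_def x3_def y3_def x4_def y4_def x5_def y5_def
  have sg1: "((x1-x3)*(y2-y3)-(y1-y3)*(x2-x3)) * ((x5-x3)*(y1-y3)-(y5-y3)*(x1-x3)) > 0"
   and sg2: "((x5-x3)*(y1-y3)-(y5-y3)*(x1-x3)) * ((x5-x3)*(y4-y3)-(y5-y3)*(x4-x3)) < 0"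
    using coord_signs[OF b(7)] unfolding defs by auto
  have cer0: "(x5-x3)*(y1-y3)-(y5-y3)*(x1-x3) \<noteq> 0" using sg2 by auto
  have K0: "(x5-x3)^2+(y5-y3)^2 \<noteq> 0"
  proof
    assume "(x5-x3)^2+(y5-y3)^2 = 0"
    then have "x5-x3 = 0" "y5-y3 = 0" using sumsq0 by blast+
    then show False using cer0 by simp
  qed
  have s0: "(x1-x3)^2+(y1-y3)^2 \<noteq> 0"
  proof
    assume "(x1-x3)^2+(y1-y3)^2 = 0"
    then have "x1-x3 = 0" "y1-y3 = 0" using sumsq0 by blast+
    then show False using cer0 by simp
  qed
  have u1: "(a 1)^2 = (x2-x1)^2+(y2-y1)^2" using b(1) unfolding sqd_def defs by (simp add: power2_commute)
  have u2: "(a 2)^2 = (x3-x2)^2+(y3-y2)^2" using b(2) unfolding sqd_def defs by (simp add: power2_commute)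
  have u3: "(a 3)^2 = (x4-x3)^2+(y4-y3)^2" using b(3) unfolding sqd_def defs by (simp add: power2_commute)
  have u4: "(a 4)^2 = (x5-x4)^2+(y5-y4)^2" using b(4) unfolding sqd_def defs by (simp add: power2_commute)
  have u5: "(a 5)^2 = (x5-x1)^2+(y5-y1)^2" using b(5) unfolding sqd_def defs by (simp add: power2_commute)
  have kk: "k^2 = (x5-x3)^2+(y5-y3)^2" using b(6) unfolding sqd_def defs by (simp add: power2_commute)
  have s: "xsq C 2 = (x1-x3)^2+(y1-y3)^2" unfolding xsq_def nat_facts vtx_simps sqd_def defs by simp
  have X1: "xsq C 1 = (x5-x2)^2+(y5-y2)^2" unfolding xsq_def nat_facts vtx_simps sqd_def defs by simp
  have X3: "xsq C 3 = (x4-x2)^2+(y4-y2)^2" unfolding xsq_def nat_facts vtx_simps sqd_def defs by (simp add: power2_commute)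
  have X5: "xsq C 5 = (x4-x1)^2+(y4-y1)^2" unfolding xsq_def nat_facts vtx_simps sqd_def defs by simp
  show "xsq C 1 = F1 ((a 1)^2) ((a 2)^2) ((a 5)^2) (k^2) (xsq C 2)"
    unfolding X1 s u1 u2 u5 kk by (rule F13_coord(1)[OF K0 s0 sg1 sg2])
  show "xsq C 3 = F3 ((a 1)^2) ((a 2)^2) ((a 3)^2) ((a 4)^2) ((a 5)^2) (k^2) (xsq C 2)"
    unfolding X3 s u1 u2 u3 u4 u5 kk by (rule F13_coord(2)[OF K0 s0 sg1 sg2])
  show "xsq C 5 = F5 ((a 3)^2) ((a 4)^2) ((a 5)^2) (k^2) (xsq C 2)"
    unfolding X5 s u3 u4 u5 kk by (rule F5_coord[OF K0 sg2])
qed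

lemma deriv_eq: "(f has_real_derivative D) F \<Longrightarrow> D = D' \<Longrightarrow> (f has_real_derivative D') F" by simp

lemma A_derivs:
  assumes "in_slice a k C"
  shows "(F1 ((a 1)^2) ((a 2)^2) ((a 5)^2) (k^2) has_real_derivative
            -(oarea C 1 2 5 / oarea C 1 2 3) * (oarea C 2 3 5 / oarea C 1 3 5)) (at (xsq C 2))"
    and "(F3 ((a 1)^2) ((a 2)^2) ((a 3)^2) ((a 4)^2) ((a 5)^2) (k^2) has_real_derivative
            -(oarea C 2 3 4 / oarea C 1 3 5) * (oarea C 1 2 5 / oarea C 1 2 3)) (at (xsq C 2))"
    and "(F5 ((a 3)^2) ((a 4)^2) ((a 5)^2) (k^2) has_real_derivative
            oarea C 1 4 5 / oarea C 1 3 5) (at (xsq C 2))"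
proof -
  note b = slice_basic[OF assms]
  define x1 where "x1 = fst (C 1)" define y1 where "y1 = snd (C 1)"
  define x2 where "x2 = fst (C 2)" define y2 where "y2 = snd (C 2)"
  define x3 where "x3 = fst (C 3)" define y3 where "y3 = snd (C 3)"
  define x4 where "x4 = fst (C 4)" define y4 where "y4 = snd (C 4)"
  define x5 where "x5 = fst (C 5)" define y5 where "y5 = snd (C 5)"
  note defs = x1_def y1_def x2_def y2_def x3_def y3_def x4_def y4_def x5_def y5_def
  have sg1: "((x1-x3)*(y2-y3)-(y1-y3)*(x2-x3)) * ((x5-x3)*(y1-y3)-(y5-y3)*(x1-x3)) > 0"
   and sg2: "((x5-x3)*(y1-y3)-(y5-y3)*(x1-x3)) * ((x5-x3)*(y4-y3)-(y5-y3)*(x4-x3)) < 0"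
    using coord_signs[OF b(7)] unfolding defs by auto
  have cer0: "(x5-x3)*(y1-y3)-(y5-y3)*(x1-x3) \<noteq> 0" using sg2 by auto
  have K0: "(x5-x3)^2+(y5-y3)^2 \<noteq> 0"
  proof
    assume "(x5-x3)^2+(y5-y3)^2 = 0"
    then have "x5-x3 = 0" "y5-y3 = 0" using sumsq0 by blast+
    then show False using cer0 by simp
  qed
  have s0: "(x1-x3)^2+(y1-y3)^2 \<noteq> 0"
  proof
    assume "(x1-x3)^2+(y1-y3)^2 = 0"
    then have "x1-x3 = 0" "y1-y3 = 0" using sumsq0 by blast+
    then show False using cer0 by simp
  qed
  have u1: "(a 1)^2 = (x2-x1)^2+(y2-y1)^2" using b(1) unfolding sqd_def defs by (simp add: power2_commute)
  have u2: "(a 2)^2 = (x3-x2)^2+(y3-y2)^2" using b(2) unfolding sqd_def defs by (simp add: power2_commute)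
  have u3: "(a 3)^2 = (x4-x3)^2+(y4-y3)^2" using b(3) unfolding sqd_def defs by (simp add: power2_commute)
  have u4: "(a 4)^2 = (x5-x4)^2+(y5-y4)^2" using b(4) unfolding sqd_def defs by (simp add: power2_commute)
  have u5: "(a 5)^2 = (x5-x1)^2+(y5-y1)^2" using b(5) unfolding sqd_def defs by (simp add: power2_commute)
  have kk: "k^2 = (x5-x3)^2+(y5-y3)^2" using b(6) unfolding sqd_def defs by (simp add: power2_commute)
  have s: "xsq C 2 = (x1-x3)^2+(y1-y3)^2" unfolding xsq_def nat_facts vtx_simps sqd_def defs by simp
  have X1: "xsq C 1 = (x5-x2)^2+(y5-y2)^2" unfolding xsq_def nat_facts vtx_simps sqd_def defs by simp
  have X3: "xsq C 3 = (x4-x2)^2+(y4-y2)^2" unfolding xsq_def nat_facts vtx_simps sqd_def defs by (simp add: power2_commute)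
  have X5: "xsq C 5 = (x4-x1)^2+(y4-y1)^2" unfolding xsq_def nat_facts vtx_simps sqd_def defs by simp
  have crp0: "(x1-x3)*(y2-y3)-(y1-y3)*(x2-x3) \<noteq> 0" using sg1 by auto
  have o125: "oarea C 1 2 5 = ((x2-x1)*(y5-y1)-(y2-y1)*(x5-x1))/2" unfolding oarea_def Let_def vtx_simps defs ..
  have o123: "oarea C 1 2 3 = ((x2-x1)*(y3-y1)-(y2-y1)*(x3-x1))/2" unfolding oarea_def Let_def vtx_simps defs ..
  have o235: "oarea C 2 3 5 = ((x3-x2)*(y5-y2)-(y3-y2)*(x5-x2))/2" unfolding oarea_def Let_def vtx_simps defs ..
  have o135: "oarea C 1 3 5 = ((x3-x1)*(y5-y1)-(y3-y1)*(x5-x1))/2" unfolding oarea_def Let_def vtx_simps defs ..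
  have o234: "oarea C 2 3 4 = ((x3-x2)*(y4-y2)-(y3-y2)*(x4-x2))/2" unfolding oarea_def Let_def vtx_simps defs ..
  have o145: "oarea C 1 4 5 = ((x4-x1)*(y5-y1)-(y4-y1)*(x5-x1))/2" unfolding oarea_def Let_def vtx_simps defs ..
  have QA0: "QA ((x2-x1)^2+(y2-y1)^2) ((x3-x2)^2+(y3-y2)^2) ((x1-x3)^2+(y1-y3)^2) > 0"
  proof -
    have "QA ((x2-x1)^2+(y2-y1)^2) ((x3-x2)^2+(y3-y2)^2) ((x1-x3)^2+(y1-y3)^2) = 4*((x1-x3)*(y2-y3)-(y1-y3)*(x2-x3))^2"
      unfolding QA_def by algebra
    then show ?thesis using crp0 by simp
  qed
  have QB0: "QB ((x5-x1)^2+(y5-y1)^2) ((x5-x3)^2+(y5-y3)^2) ((x1-x3)^2+(y1-y3)^2) > 0"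
  proof -
    have "QB ((x5-x1)^2+(y5-y1)^2) ((x5-x3)^2+(y5-y3)^2) ((x1-x3)^2+(y1-y3)^2) = 4*((x5-x3)*(y1-y3)-(y5-y3)*(x1-x3))^2"
      unfolding QB_def by algebra
    then show ?thesis using cer0 by simp
  qed
  note dA = sqrtQA_deriv[OF QA0] and dB = sqrtQB_deriv[OF QB0]
  show "(F1 ((a 1)^2) ((a 2)^2) ((a 5)^2) (k^2) has_real_derivative
            -(oarea C 1 2 5 / oarea C 1 2 3) * (oarea C 2 3 5 / oarea C 1 3 5)) (at (xsq C 2))"
    unfolding s u1 u2 u5 kk F1_def[abs_def] o125 o123 o235 o135
    apply (rule deriv_eq[OF gen1_deriv[OF dA dB s0]])
    by (rule D1_val[OF K0 s0 sg1 sg2])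
  show "(F3 ((a 1)^2) ((a 2)^2) ((a 3)^2) ((a 4)^2) ((a 5)^2) (k^2) has_real_derivative
            -(oarea C 2 3 4 / oarea C 1 3 5) * (oarea C 1 2 5 / oarea C 1 2 3)) (at (xsq C 2))"
    unfolding s u1 u2 u3 u4 u5 kk F3_def[abs_def] o125 o123 o234 o135
    apply (rule deriv_eq[OF gen3_deriv[OF dA dB s0 K0]])
    by (rule D3_val[OF K0 s0 sg1 sg2])
  show "(F5 ((a 3)^2) ((a 4)^2) ((a 5)^2) (k^2) has_real_derivative
            oarea C 1 4 5 / oarea C 1 3 5) (at (xsq C 2))"
    unfolding s u3 u4 u5 kk F5_def[abs_def] o145 o135
    apply (rule deriv_eq[OF gen5_deriv[OF dB K0]])
    by (rule D_vals[OF K0 s0 sg1 sg2])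
qed



lemma rot_lemma:
  fixes e1 e2 K s u \<sigma> Q :: real
  assumes K: "K = e1^2+e2^2" "K \<noteq> 0" and sg: "\<sigma>^2 = 1" and Q: "Q = 4* s*K - (s+K-u)^2" "Q \<ge> 0"
  shows "(((s+K-u)/(2*K))*e1 - (\<sigma>* sqrt Q/(2*K))*e2)^2 + (((s+K-u)/(2*K))*e2 + (\<sigma>* sqrt Q/(2*K))*e1)^2 = s"
    and "(((s+K-u)/(2*K))*e1 - (\<sigma>* sqrt Q/(2*K))*e2 - e1)^2 + (((s+K-u)/(2*K))*e2 + (\<sigma>* sqrt Q/(2*K))*e1 - e2)^2 = u"
proof -
  have sq: "(sqrt Q)^2 = Q" by (rule real_sqrt_pow2[OF Q(2)])
  define t where "t = \<sigma> * sqrt Q"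
  have t2: "t^2 = 4* s*K - (s+K-u)^2" unfolding t_def power_mult_distrib sg sq by (simp add: Q(1))
  have "(((s+K-u)/(2*K))*e1 - (t/(2*K))*e2)^2 + (((s+K-u)/(2*K))*e2 + (t/(2*K))*e1)^2
      = ((s+K-u)^2 + t^2) * (e1^2+e2^2) / (4*K^2)"
    using K(2) by (simp add: field_simps power2_eq_square)
  also have "... = s" unfolding t2 K(1)[symmetric] using K(2) by (simp add: field_simps power2_eq_square)
  finally show "(((s+K-u)/(2*K))*e1 - (\<sigma>* sqrt Q/(2*K))*e2)^2 + (((s+K-u)/(2*K))*e2 + (\<sigma>* sqrt Q/(2*K))*e1)^2 = s"
    unfolding t_def .
  have "(((s+K-u)/(2*K))*e1 - (t/(2*K))*e2 - e1)^2 + (((s+K-u)/(2*K))*e2 + (t/(2*K))*e1 - e2)^2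
      = ((s+K-u - 2*K)^2 + t^2) * (e1^2+e2^2) / (4*K^2)"
    using K(2) by (simp add: field_simps power2_eq_square)
  also have "... = u" unfolding t2 K(1)[symmetric] using K(2) by (simp add: field_simps power2_eq_square)
  finally show "(((s+K-u)/(2*K))*e1 - (\<sigma>* sqrt Q/(2*K))*e2 - e1)^2 + (((s+K-u)/(2*K))*e2 + (\<sigma>* sqrt Q/(2*K))*e1 - e2)^2 = u"
    unfolding t_def .
qed

lemma rot_at:
  fixes e1 e2 w1 w2 :: real
  defines "K \<equiv> e1^2+e2^2" and "s \<equiv> w1^2+w2^2" and "u \<equiv> (w1-e1)^2+(w2-e2)^2"
    and "cr \<equiv> e1*w2 - e2*w1"
  assumes K0: "K \<noteq> 0"
  shows "((s+K-u)/(2*K))*e1 - (sgn cr * sqrt (4* s*K - (s+K-u)^2)/(2*K))*e2 = w1"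
    and "((s+K-u)/(2*K))*e2 + (sgn cr * sqrt (4* s*K - (s+K-u)^2)/(2*K))*e1 = w2"
proof -
  have "4* s*K - (s+K-u)^2 = 4*cr^2" unfolding s_def K_def u_def cr_def by algebra
  then have q: "sgn cr * sqrt (4* s*K - (s+K-u)^2) = 2*cr"
    by (simp add: sqrt4sq sgn_mult_abs)
  have d: "s+K-u = 2*(w1*e1+w2*e2)" unfolding s_def K_def u_def by algebra
  show "((s+K-u)/(2*K))*e1 - (sgn cr * sqrt (4* s*K - (s+K-u)^2)/(2*K))*e2 = w1"
    unfolding q unfolding d using K0 by (simp add: field_simps) (unfold K_def cr_def, algebra)
  show "((s+K-u)/(2*K))*e2 + (sgn cr * sqrt (4* s*K - (s+K-u)^2)/(2*K))*e1 = w2"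
    unfolding q unfolding d using K0 by (simp add: field_simps) (unfold K_def cr_def, algebra)
qed
lemma nat_facts2: "(4::nat)+1 = 5" by simp

lemma realizes_I:
  assumes "sqd (C 1) (C 2) = (a 1)^2" "sqd (C 2) (C 3) = (a 2)^2" "sqd (C 3) (C 4) = (a 3)^2"
    "sqd (C 4) (C 5) = (a 4)^2" "sqd (C 5) (C 1) = (a 5)^2" and apos: "\<forall>i\<in>{1..5}. a i > 0"
  shows "realizes a C"
  unfolding realizes_def
proof (intro ballI)
  fix i :: nat assume i: "i \<in> {1..5}"
  then have "a i > 0" using apos by blast
  moreover have "i = 1 \<or> i = 2 \<or> i = 3 \<or> i = 4 \<or> i = 5" using i by auto
  ultimately show "sqrt (sqd (vtx C i) (vtx C (i + 1))) = a i"
    using assms(1-5) by (elim disjE) (simp_all only: nat_facts nat_facts2 vtx_simps real_sqrt_abs abs_of_pos)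
qed

lemma idx_range: "(n + 4) mod 5 + 1 \<in> {1..(5::nat)}" by auto

lemma exist_near:
  assumes apos: "\<forall>i\<in>{1..5}. a i > 0" and A: "in_slice a k A"
  shows "\<forall>\<^sub>F s in at (xsq A 2). \<exists>C. in_slice a k C \<and> xsq C 2 = s"
proof -
  note b = slice_basic[OF A]
  define x1 where "x1 = fst (A 1)" define y1 where "y1 = snd (A 1)"
  define x2 where "x2 = fst (A 2)" define y2 where "y2 = snd (A 2)"
  define x3 where "x3 = fst (A 3)" define y3 where "y3 = snd (A 3)"
  define x4 where "x4 = fst (A 4)" define y4 where "y4 = snd (A 4)"
  define x5 where "x5 = fst (A 5)" define y5 where "y5 = snd (A 5)"
  note defs = x1_def y1_def x2_def y2_def x3_def y3_def x4_def y4_def x5_def y5_def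
  have sg1: "((x1-x3)*(y2-y3)-(y1-y3)*(x2-x3)) * ((x5-x3)*(y1-y3)-(y5-y3)*(x1-x3)) > 0"
   and sg2: "((x5-x3)*(y1-y3)-(y5-y3)*(x1-x3)) * ((x5-x3)*(y4-y3)-(y5-y3)*(x4-x3)) < 0"
    using coord_signs[OF b(7)] unfolding defs by auto
  have cer0: "(x5-x3)*(y1-y3)-(y5-y3)*(x1-x3) \<noteq> 0" using sg2 by auto
  have crp0: "(x1-x3)*(y2-y3)-(y1-y3)*(x2-x3) \<noteq> 0" using sg1 by auto
  define e1 where "e1 = x5 - x3" define e2 where "e2 = y5 - y3"
  define KK where "KK = e1^2+e2^2"
  define S0 where "S0 = xsq A 2"
  define u1 where "u1 = (a 1)^2" define u2 where "u2 = (a 2)^2" define u5 where "u5 = (a 5)^2"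
  have K0: "KK \<noteq> 0"
  proof
    assume "KK = 0"
    then have "e1 = 0" "e2 = 0" using sumsq0 unfolding KK_def by blast+
    then show False using cer0 unfolding e1_def e2_def by simp
  qed
  have hS0: "(x1-x3)^2+(y1-y3)^2 = S0" unfolding S0_def xsq_def nat_facts vtx_simps sqd_def defs by simp
  have S0pos: "S0 > 0"
  proof -
    have "S0 \<noteq> 0"
    proof
      assume "S0 = 0"
      then have "x1-x3 = 0" "y1-y3 = 0" using sumsq0 hS0 by metis+
      then show False using cer0 by simp
    qed
    moreover have "S0 \<ge> 0" unfolding hS0[symmetric] by simp
    ultimately show ?thesis by (simp add: less_le)
  qed
  have hu1: "(x2-x3-(x1-x3))^2+(y2-y3-(y1-y3))^2 = u1" using b(1) unfolding u1_def sqd_def defs by (simp add: power2_commute)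
  have hu2: "(x2-x3)^2+(y2-y3)^2 = u2" using b(2) unfolding u2_def sqd_def defs by (simp add: power2_commute)
  have hu5: "(x1-x3-e1)^2+(y1-y3-e2)^2 = u5" using b(5) unfolding u5_def e1_def e2_def sqd_def defs by (simp add: power2_commute)
  have hK: "e1^2+e2^2 = KK" unfolding KK_def ..
  define \<sigma>2 where "\<sigma>2 = sgn (e1*(y1-y3) - e2*(x1-x3))"
  define \<sigma>1 where "\<sigma>1 = sgn ((x1-x3)*(y2-y3) - (y1-y3)*(x2-x3))"
  define R1 where "R1 = (\<lambda>s. ((s+KK-u5)/(2*KK))*e1 - (\<sigma>2* sqrt (QB u5 KK s)/(2*KK))*e2)"
  define R2 where "R2 = (\<lambda>s. ((s+KK-u5)/(2*KK))*e2 + (\<sigma>2* sqrt (QB u5 KK s)/(2*KK))*e1)"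
  define W1 where "W1 = (\<lambda>s. ((u2+s-u1)/(2* s))*R1 s - (\<sigma>1* sqrt (QA u1 u2 s)/(2* s))*R2 s)"
  define W2 where "W2 = (\<lambda>s. ((u2+s-u1)/(2* s))*R2 s + (\<sigma>1* sqrt (QA u1 u2 s)/(2* s))*R1 s)"
  have R1_0: "R1 S0 = x1 - x3"
    using rot_at(1)[of e1 e2 "x1-x3" "y1-y3", unfolded hK hS0 hu5, OF K0]
    unfolding R1_def QB_def \<sigma>2_def by simp
  have R2_0: "R2 S0 = y1 - y3"
    using rot_at(2)[of e1 e2 "x1-x3" "y1-y3", unfolded hK hS0 hu5, OF K0]
    unfolding R2_def QB_def \<sigma>2_def by simp
  have W1_0: "W1 S0 = x2 - x3"
    using rot_at(1)[of "x1-x3" "y1-y3" "x2-x3" "y2-y3", unfolded hS0 hu2 hu1] S0pos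
    unfolding W1_def QA_def \<sigma>1_def R1_0 R2_0 by (simp add: mult.commute)
  have W2_0: "W2 S0 = y2 - y3"
    using rot_at(2)[of "x1-x3" "y1-y3" "x2-x3" "y2-y3", unfolded hS0 hu2 hu1] S0pos
    unfolding W2_def QA_def \<sigma>1_def R1_0 R2_0 by (simp add: mult.commute)
  define B where "B = (\<lambda>s i. if i = 1 then (x3 + R1 s, y3 + R2 s) else if i = 2 then (x3 + W1 s, y3 + W2 s) else A i)"
  have A1: "A 1 = (x1, y1)" and A2: "A 2 = (x2, y2)" and A3: "A 3 = (x3, y3)" and A5: "A 5 = (x5, y5)"
    unfolding defs by simp_all
  have B0: "\<And>m. m \<in> {1..5} \<Longrightarrow> B S0 m = A m"
    unfolding B_def using R1_0 R2_0 W1_0 W2_0 A1 A2 by auto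
  have vB0: "\<And>n. vtx (B S0) n = vtx A n" unfolding vtx_def using B0[OF idx_range] by simp
  have cR: "isCont R1 S0" "isCont R2 S0" unfolding R1_def R2_def QB_def using K0 by (auto intro!: continuous_intros)
  have cW: "isCont W1 S0" "isCont W2 S0" unfolding W1_def W2_def QA_def using cR S0pos
    by (auto intro!: continuous_intros)
  have cB: "isCont (\<lambda>s. B s m) S0" for m
  proof (cases "m = 1")
    case True then show ?thesis unfolding B_def using cR by (auto intro!: continuous_intros)
  next
    case False
    then show ?thesis
    proof (cases "m = 2")
      case True then show ?thesis unfolding B_def using cW by (auto intro!: continuous_intros)
    next
      case False then show ?thesis unfolding B_def using \<open>m \<noteq> 1\<close> by simp
    qed
  qed
  have tO: "\<And>i j l. ((\<lambda>s. oarea (B s) i j l) \<longlongrightarrow> oarea A i j l) (at S0)"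
  proof -
    fix i j l
    have "isCont (\<lambda>s. oarea (B s) i j l) S0"
      unfolding oarea_def Let_def vtx_def by (auto intro!: continuous_intros cB)
    then show "((\<lambda>s. oarea (B s) i j l) \<longlongrightarrow> oarea A i j l) (at S0)"
      unfolding isCont_def oarea_def Let_def vB0 .
  qed
  have evconv: "\<forall>\<^sub>F s in at S0. strictly_convex (B s)"
    using b(7) unfolding strictly_convex_def
  proof (elim disjE)
    assume h: "\<forall>i\<in>{1..5}. \<forall>j\<in>{1..5}. j \<noteq> i \<and> j \<noteq> i mod 5 + 1 \<longrightarrow> 0 < oarea A i (i + 1) j"
    have "\<forall>\<^sub>F s in at S0. \<forall>i\<in>{1..5}. \<forall>j\<in>{1..5}. j \<noteq> i \<and> j \<noteq> i mod 5 + 1 \<longrightarrow> 0 < oarea (B s) i (i + 1) j"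
    proof (rule eventually_ball_finite, simp, rule ballI, rule eventually_ball_finite, simp, rule ballI)
      fix i j :: nat assume ij: "i \<in> {1..5}" "j \<in> {1..5}"
      show "\<forall>\<^sub>F s in at S0. j \<noteq> i \<and> j \<noteq> i mod 5 + 1 \<longrightarrow> 0 < oarea (B s) i (i + 1) j"
      proof (cases "j \<noteq> i \<and> j \<noteq> i mod 5 + 1")
        case True
        then have "0 < oarea A i (i + 1) j" using h ij by blast
        from order_tendstoD(1)[OF tO this] show ?thesis by (rule eventually_mono) simp
      next
        case False then show ?thesis by (intro always_eventually allI impI) blast
      qed
    qed
    then show "\<forall>\<^sub>F s in at S0. (\<forall>i\<in>{1..5}. \<forall>j\<in>{1..5}. j \<noteq> i \<and> j \<noteq> i mod 5 + 1 \<longrightarrow> 0 < oarea (B s) i (i + 1) j) \<or>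
       (\<forall>i\<in>{1..5}. \<forall>j\<in>{1..5}. j \<noteq> i \<and> j \<noteq> i mod 5 + 1 \<longrightarrow> oarea (B s) i (i + 1) j < 0)"
      by (rule eventually_mono) simp
  next
    assume h: "\<forall>i\<in>{1..5}. \<forall>j\<in>{1..5}. j \<noteq> i \<and> j \<noteq> i mod 5 + 1 \<longrightarrow> oarea A i (i + 1) j < 0"
    have "\<forall>\<^sub>F s in at S0. \<forall>i\<in>{1..5}. \<forall>j\<in>{1..5}. j \<noteq> i \<and> j \<noteq> i mod 5 + 1 \<longrightarrow> oarea (B s) i (i + 1) j < 0"
    proof (rule eventually_ball_finite, simp, rule ballI, rule eventually_ball_finite, simp, rule ballI)
      fix i j :: nat assume ij: "i \<in> {1..5}" "j \<in> {1..5}"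
      show "\<forall>\<^sub>F s in at S0. j \<noteq> i \<and> j \<noteq> i mod 5 + 1 \<longrightarrow> oarea (B s) i (i + 1) j < 0"
      proof (cases "j \<noteq> i \<and> j \<noteq> i mod 5 + 1")
        case True
        then have "oarea A i (i + 1) j < 0" using h ij by blast
        from order_tendstoD(2)[OF tO this] show ?thesis by (rule eventually_mono) simp
      next
        case False then show ?thesis by (intro always_eventually allI impI) blast
      qed
    qed
    then show "\<forall>\<^sub>F s in at S0. (\<forall>i\<in>{1..5}. \<forall>j\<in>{1..5}. j \<noteq> i \<and> j \<noteq> i mod 5 + 1 \<longrightarrow> 0 < oarea (B s) i (i + 1) j) \<or>
       (\<forall>i\<in>{1..5}. \<forall>j\<in>{1..5}. j \<noteq> i \<and> j \<noteq> i mod 5 + 1 \<longrightarrow> oarea (B s) i (i + 1) j < 0)"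
      by (rule eventually_mono) simp
  qed
  have QA0: "QA u1 u2 S0 > 0"
  proof -
    have "QA u1 u2 S0 = 4*((x1-x3)*(y2-y3)-(y1-y3)*(x2-x3))^2"
      unfolding QA_def hu1[symmetric] hu2[symmetric] hS0[symmetric] by algebra
    then show ?thesis using crp0 by simp
  qed
  have QB0: "QB u5 KK S0 > 0"
  proof -
    have "QB u5 KK S0 = 4*((x5-x3)*(y1-y3)-(y5-y3)*(x1-x3))^2"
      unfolding QB_def hu5[symmetric] hS0[symmetric] KK_def e1_def e2_def by algebra
    then show ?thesis using cer0 by simp
  qed
  have evQA: "\<forall>\<^sub>F s in at S0. QA u1 u2 s > 0"
  proof -
    have "isCont (QA u1 u2) S0" unfolding QA_def[abs_def] by (intro continuous_intros)
    then show ?thesis using order_tendstoD(1)[OF _ QA0] unfolding isCont_def by blast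
  qed
  have evQB: "\<forall>\<^sub>F s in at S0. QB u5 KK s > 0"
  proof -
    have "isCont (QB u5 KK) S0" unfolding QB_def[abs_def] by (intro continuous_intros)
    then show ?thesis using order_tendstoD(1)[OF _ QB0] unfolding isCont_def by blast
  qed
  have evS: "\<forall>\<^sub>F s in at S0. s > 0"
    using order_tendstoD(1)[OF tendsto_ident_at S0pos] .
  have sgn2: "\<sigma>2^2 = 1" unfolding \<sigma>2_def using cer0 unfolding e1_def e2_def
    by (cases "(x5 - x3) * (y1 - y3) - (y5 - y3) * (x1 - x3) > 0") (auto simp: algebra_simps)
  have sgn1: "\<sigma>1^2 = 1" unfolding \<sigma>1_def using crp0
    by (cases "(x1 - x3) * (y2 - y3) - (y1 - y3) * (x2 - x3) > 0") (auto simp: algebra_simps)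
  have good: "\<exists>C. in_slice a k C \<and> xsq C 2 = s"
    if hs: "strictly_convex (B s)" "QA u1 u2 s > 0" "QB u5 KK s > 0" "s > 0" for s
  proof (intro exI conjI)
    have r1: "(R1 s)^2 + (R2 s)^2 = s"
      using rot_lemma(1)[OF hK[symmetric] K0 sgn2 QB_def less_imp_le[OF hs(3)]] unfolding R1_def R2_def .
    have r2: "(R1 s - e1)^2 + (R2 s - e2)^2 = u5"
      using rot_lemma(2)[OF hK[symmetric] K0 sgn2 QB_def less_imp_le[OF hs(3)]] unfolding R1_def R2_def .
    have w1: "(W1 s)^2 + (W2 s)^2 = u2"
      using rot_lemma(1)[OF r1[symmetric] _ sgn1 QA_def less_imp_le[OF hs(2)]] hs(4) unfolding W1_def W2_def by simp
    have w2: "(W1 s - R1 s)^2 + (W2 s - R2 s)^2 = u1"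
      using rot_lemma(2)[OF r1[symmetric] _ sgn1 QA_def less_imp_le[OF hs(2)]] hs(4) unfolding W1_def W2_def by simp
    have B1: "B s 1 = (x3 + R1 s, y3 + R2 s)" and B2: "B s 2 = (x3 + W1 s, y3 + W2 s)"
      and B3: "B s 3 = A 3" and B4: "B s 4 = A 4" and B5: "B s 5 = A 5" unfolding B_def by simp_all
    show "xsq (B s) 2 = s" unfolding xsq_def nat_facts vtx_simps B1 B3 A3 sqd_def using r1 by simp
    show "in_slice a k (B s)" unfolding in_slice_def
    proof (intro conjI)
      show "strictly_convex (B s)" by (fact hs(1))
      show "sqrt (sqd (vtx (B s) 3) (vtx (B s) 5)) = k" unfolding vtx_simps B3 B5
        using A unfolding in_slice_def by simp
      show "realizes a (B s)"
      proof (rule realizes_I[OF _ _ _ _ _ apos])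
        show "sqd (B s 1) (B s 2) = (a 1)^2" unfolding B1 B2 sqd_def u1_def[symmetric] w2[symmetric]
          by (simp add: power2_commute)
        show "sqd (B s 2) (B s 3) = (a 2)^2" unfolding B2 B3 A3 sqd_def u2_def[symmetric] w1[symmetric]
          by simp
        show "sqd (B s 3) (B s 4) = (a 3)^2" unfolding B3 B4 by (rule b(3))
        show "sqd (B s 4) (B s 5) = (a 4)^2" unfolding B4 B5 by (rule b(4))
        show "sqd (B s 5) (B s 1) = (a 5)^2" unfolding B5 B1 A5 sqd_def u5_def[symmetric] r2[symmetric] e1_def e2_def
          by (simp add: power2_commute algebra_simps)
      qed
    qed
  qed
  show ?thesis unfolding S0_def[symmetric]
    using evconv evQA evQB evS by eventually_elim (rule good)
qed

lemma slice_fun_eq: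
  assumes "in_slice a k C" "xsq C 2 = s"
  shows "slice_fun a k 1 s = F1 ((a 1)^2) ((a 2)^2) ((a 5)^2) (k^2) s"
    and "slice_fun a k 3 s = F3 ((a 1)^2) ((a 2)^2) ((a 3)^2) ((a 4)^2) ((a 5)^2) (k^2) s"
    and "slice_fun a k 5 s = F5 ((a 3)^2) ((a 4)^2) ((a 5)^2) (k^2) s"
  unfolding slice_fun_def
  by (rule the_equality; use assms slice_F in blast)+

theorem lemma4:
  fixes a :: "nat \<Rightarrow> real" and k :: real and A :: "nat \<Rightarrow> real \<times> real"
  assumes "\<forall>i\<in>{1..5}. a i > 0"
    and "in_slice a k A"
  shows "((\<lambda>s. - slice_fun a k 1 s) has_real_derivative
            (oarea A 1 2 5 / oarea A 1 2 3) * (oarea A 2 3 5 / oarea A 1 3 5)) (at (xsq A 2)) \<and>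
         ((\<lambda>s. - slice_fun a k 3 s) has_real_derivative
            (oarea A 2 3 4 / oarea A 1 3 5) * (oarea A 1 2 5 / oarea A 1 2 3)) (at (xsq A 2)) \<and>
         (slice_fun a k 5 has_real_derivative
            oarea A 1 4 5 / oarea A 1 3 5) (at (xsq A 2))"
proof -
  note ev = exist_near[OF assms]
  note d = A_derivs[OF assms(2)]
  have e1: "\<forall>\<^sub>F s in at (xsq A 2). F1 ((a 1)^2) ((a 2)^2) ((a 5)^2) (k^2) s = slice_fun a k 1 s"
    using ev by (rule eventually_mono) (metis slice_fun_eq(1))
  have e3: "\<forall>\<^sub>F s in at (xsq A 2). F3 ((a 1)^2) ((a 2)^2) ((a 3)^2) ((a 4)^2) ((a 5)^2) (k^2) s = slice_fun a k 3 s"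
    using ev by (rule eventually_mono) (metis slice_fun_eq(2))
  have e5: "\<forall>\<^sub>F s in at (xsq A 2). F5 ((a 3)^2) ((a 4)^2) ((a 5)^2) (k^2) s = slice_fun a k 5 s"
    using ev by (rule eventually_mono) (metis slice_fun_eq(3))
  have d1: "(slice_fun a k 1 has_real_derivative -(oarea A 1 2 5 / oarea A 1 2 3) * (oarea A 2 3 5 / oarea A 1 3 5)) (at (xsq A 2))"
    using d(1) has_field_derivative_cong_eventually[OF e1 slice_fun_eq(1)[OF assms(2) refl, symmetric]] by simp
  have d3: "(slice_fun a k 3 has_real_derivative -(oarea A 2 3 4 / oarea A 1 3 5) * (oarea A 1 2 5 / oarea A 1 2 3)) (at (xsq A 2))"
    using d(2) has_field_derivative_cong_eventually[OF e3 slice_fun_eq(2)[OF assms(2) refl, symmetric]] by simp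
  have d5: "(slice_fun a k 5 has_real_derivative oarea A 1 4 5 / oarea A 1 3 5) (at (xsq A 2))"
    using d(3) has_field_derivative_cong_eventually[OF e5 slice_fun_eq(3)[OF assms(2) refl, symmetric]] by simp
  show ?thesis
    using DERIV_minus[OF d1] DERIV_minus[OF d3] d5 by simp
qed


end
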